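(* Let $V_{\mathrm{total}}\ge0$, $B_{\mathrm{total}}>0$, $R^S_{\mathrm{total}}>0$, $F_{\mathrm{total}}>0$. Problem (P1): minimize $\max_u T_u(B_u,R_u^S,F_u,\eta_u)$ over $B_u>0$, $R_u^S>0$, $F_u>0$, $\eta_u\in[0,1]$ ($u=1,\dots,U$) subject to $\sum_uV_u(B_u,R_u^S,F_u,\eta_u)\le V_{\mathrm{total}}$, $\sum_uB_u\le B_{\mathrm{total}}$, $\sum_uR_u^S\le R^S_{\mathrm{total}}$, $\sum_uF_u\le F_{\mathrm{total}}$. Problem (P2): minimize $\max_uT_u^{\eta\text{-opt}}(B_u,R_u^S,F_u)$ over $B_u>0$, $R_u^S>0$, $F_u>0$ subject to $\sum_uV_u^{\eta\text{-opt}}(B_u,R_u^S,F_u)\le V_{\mathrm{total}}$, $\sum_uB_u\le B_{\mathrm{total}}$, $\sum_uR_u^S\le R^S_{\mathrm{total}}$, $\sum_uF_u\le F_{\mathrm{total}}$. Then the optimal values (infima) of (P1) and (P2) are equal.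
   Context: There are users $u=1,\dots,U$, each with constants $D_u>0$, $r_u>0$, $\rho_u>0$, $\zeta_u\in(0,1)$. For $B_u>0$, $R_u^S>0$, $F_u>0$, $\eta_u\in[0,1]$, write $c_u=B_ur_u$ and define $T_u(B_u,R_u^S,F_u,\eta_u)$ and $V_u(B_u,R_u^S,F_u,\eta_u)$ piecewise: (a) if $\eta_uc_u\ge F_u/\rho_u$, $\zeta_uF_u/\rho_u+(1-\eta_u)c_u\ge R_u^S$, $F_u/\rho_u\ge\frac{\eta_uR_u^S}{\zeta_u\eta_u+1-\eta_u}$: $T_u=\frac{D_u}{R_u^S}(\zeta_u\eta_u+1-\eta_u)$, $V_u=\frac{D_u}{c_u}[c_u-R_u^S-(1-\zeta_u)\frac{F_u}{\rho_u}]$; (b) if $\eta_uc_u\ge F_u/\rho_u$, $\zeta_uF_u/\rho_u+(1-\eta_u)c_u\ge R_u^S$, $F_u/\rho_u<\frac{\eta_uR_u^S}{\zeta_u\eta_u+1-\eta_u}$: $T_u=\frac{\eta_uD_u\rho_u}{F_u}$, $V_u=\frac{D_u}{c_u}[c_u-R_u^S-(1-\zeta_u)\frac{F_u}{\rho_u}]$; (c) if $\eta_uc_u\ge F_u/\rho_u$, $\zeta_uF_u/\rho_u+(1-\eta_u)c_u< R_u^S$: $T_u=\frac{\eta_uD_u\rho_u}{F_u}$, $V_u=\frac{D_u}{c_u}(\eta_uc_u-\frac{F_u}{\rho_u})$; (d) if $\eta_uc_u< F_u/\rho_u$, $(\zeta_u\eta_u+1-\eta_u)c_u\ge R_u^S$: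 $T_u=\frac{D_u}{R_u^S}(\zeta_u\eta_u+1-\eta_u)$, $V_u=\frac{D_u}{c_u}[(\zeta_u\eta_u+1-\eta_u)c_u-R_u^S]$; (e) if $\eta_uc_u< F_u/\rho_u$, $(\zeta_u\eta_u+1-\eta_u)c_u< R_u^S$: $T_u=\frac{D_u}{c_u}$, $V_u=0$. The functions $T_u^{\eta\text{-opt}}(B_u,R_u^S,F_u)$ and $V_u^{\eta\text{-opt}}(B_u,R_u^S,F_u)$ are defined by six exhaustive cases (with $c_u=B_ur_u$): 1. $c_u<R_u^S$: $T^{\eta\text{-opt}}_u=\frac{D_u}{c_u}$, $V^{\eta\text{-opt}}_u=0$. 2. $R_u^S\le c_u<\frac{R_u^S}{\zeta_u}$, $\frac{F_u}{\rho_u}<\frac{c_u-R_u^S}{1-\zeta_u}$: $T^{\eta\text{-opt}}_u=\frac{D_u\rho_u}{F_u(1-\zeta_u)+\rho_uR_u^S}$, $V^{\eta\text{-opt}}_u=\frac{D_u}{c_u}[c_u-R_u^S-(1-\zeta_u)\frac{F_u}{\rho_u}]$. 3. $R_u^S\le c_u<\frac{R_u^S}{\zeta_u}$, $\frac{F_u}{\rho_u}\ge\frac{c_u-R_u^S}{1-\zeta_u}$: $T^{\eta\text{-opt}}_u=\frac{D_u}{c_u}$, $V^{\eta\text{-opt}}_u=0$. 4. $c_u\ge\frac{R_u^S}{\zeta_u}$, $\frac{F_u}{\rho_u}<\frac{R_u^S}{\zeta_u}$: $T^{\eta\text{-opt}}_u=\frac{D_u\rho_u}{F_u(1-\zeta_u)+\rho_uR_u^S}$,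 $V^{\eta\text{-opt}}_u=\frac{D_u}{c_u}[c_u-R_u^S-(1-\zeta_u)\frac{F_u}{\rho_u}]$. 5. $c_u\ge\frac{R_u^S}{\zeta_u}$, $\frac{R_u^S}{\zeta_u}\le\frac{F_u}{\rho_u}<c_u$: $T^{\eta\text{-opt}}_u=\frac{\zeta_uD_u}{R_u^S}$, $V^{\eta\text{-opt}}_u=\frac{D_u}{c_u}[c_u-R_u^S-(1-\zeta_u)\frac{F_u}{\rho_u}]$. 6. $c_u\ge\frac{R_u^S}{\zeta_u}$, $\frac{F_u}{\rho_u}\ge c_u$: $T^{\eta\text{-opt}}_u=\frac{\zeta_uD_u}{R_u^S}$, $V^{\eta\text{-opt}}_u=\frac{D_u}{c_u}(\zeta_uc_u-R_u^S)$. *)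

theory Defs
  imports Complex_Main
begin

definition T_user :: "real \<Rightarrow> real \<Rightarrow> real \<Rightarrow> real \<Rightarrow> real \<Rightarrow> real \<Rightarrow> real \<Rightarrow> real \<Rightarrow> real" where
  "T_user D r \<rho> \<zeta> B RS F \<eta> =
    (let c = B * r in
     if \<eta> * c \<ge> F / \<rho> then
       (if \<zeta> * F / \<rho> + (1 - \<eta>) * c \<ge> RS then
          (if F / \<rho> \<ge> \<eta> * RS / (\<zeta> * \<eta> + 1 - \<eta>)
           then D / RS * (\<zeta> * \<eta> + 1 - \<eta>)
           else \<eta> * D * \<rho> / F)
        else \<eta> * D * \<rho> / F)
     else
       (if (\<zeta> * \<eta> + 1 - \<eta>) * c \<ge> RS
        then D / RS * (\<zeta> * \<eta> + 1 - \<eta>)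
        else D / c))"

definition V_user :: "real \<Rightarrow> real \<Rightarrow> real \<Rightarrow> real \<Rightarrow> real \<Rightarrow> real \<Rightarrow> real \<Rightarrow> real \<Rightarrow> real" where
  "V_user D r \<rho> \<zeta> B RS F \<eta> =
    (let c = B * r in
     if \<eta> * c \<ge> F / \<rho> then
       (if \<zeta> * F / \<rho> + (1 - \<eta>) * c \<ge> RS then
          D / c * (c - RS - (1 - \<zeta>) * (F / \<rho>))
        else D / c * (\<eta> * c - F / \<rho>))
     else
       (if (\<zeta> * \<eta> + 1 - \<eta>) * c \<ge> RS
        then D / c * ((\<zeta> * \<eta> + 1 - \<eta>) * c - RS)
        else 0))"

definition T_opt :: "real \<Rightarrow> real \<Rightarrow> real \<Rightarrow> real \<Rightarrow> real \<Rightarrow> real \<Rightarrow> real \<Rightarrow> real" where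
  "T_opt D r \<rho> \<zeta> B RS F =
    (let c = B * r in
     if c < RS then D / c
     else if c < RS / \<zeta> then
       (if F / \<rho> < (c - RS) / (1 - \<zeta>)
        then D * \<rho> / (F * (1 - \<zeta>) + \<rho> * RS)
        else D / c)
     else
       (if F / \<rho> < RS / \<zeta>
        then D * \<rho> / (F * (1 - \<zeta>) + \<rho> * RS)
        else \<zeta> * D / RS))"

definition V_opt :: "real \<Rightarrow> real \<Rightarrow> real \<Rightarrow> real \<Rightarrow> real \<Rightarrow> real \<Rightarrow> real \<Rightarrow> real" where
  "V_opt D r \<rho> \<zeta> B RS F =
    (let c = B * r in
     if c < RS then 0
     else if c < RS / \<zeta> then
       (if F / \<rho> < (c - RS) / (1 - \<zeta>)
        then D / c * (c - RS - (1 - \<zeta>) * (F / \<rho>))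
        else 0)
     else
       (if F / \<rho> < c
        then D / c * (c - RS - (1 - \<zeta>) * (F / \<rho>))
        else D / c * (\<zeta> * c - RS)))"

end

theory Submission
  imports Defs
begin

definition tg :: "real\<Rightarrow>real\<Rightarrow>real\<Rightarrow>real\<Rightarrow>real\<Rightarrow>real" where
 "tg z c R x e = (if e*c \<ge> x then (if z*x+(1-e)*c \<ge> R then (if x \<ge> e*R/(z*e+1-e) then (z*e+1-e)/R else e/x) else e/x)
    else (if (z*e+1-e)*c \<ge> R then (z*e+1-e)/R else 1/c))"

definition vg :: "real\<Rightarrow>real\<Rightarrow>real\<Rightarrow>real\<Rightarrow>real\<Rightarrow>real" where
 "vg z c R x e = (if e*c \<ge> x then (if z*x+(1-e)*c \<ge> R then c-R-(1-z)*x else e*c - x)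
    else (if (z*e+1-e)*c \<ge> R then (z*e+1-e)*c-R else 0))"

definition topt :: "real\<Rightarrow>real\<Rightarrow>real\<Rightarrow>real\<Rightarrow>real" where
 "topt z c R x = (if c<R then 1/c else if c < R/z then (if x < (c-R)/(1-z) then 1/((1-z)*x+R) else 1/c)
    else (if x < R/z then 1/((1-z)*x+R) else z/R))"

definition vopt :: "real\<Rightarrow>real\<Rightarrow>real\<Rightarrow>real\<Rightarrow>real" where
 "vopt z c R x = (if c<R then 0 else if c < R/z then (if x < (c-R)/(1-z) then c-R-(1-z)*x else 0)
    else (if x < c then c-R-(1-z)*x else z*c-R))"

lemma T_user_eq: "\<rho>>0 \<Longrightarrow> F>0 \<Longrightarrow> T_user D r \<rho> \<zeta> B RS F e = D * tg \<zeta> (B*r) RS (F/\<rho>) e"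
  unfolding T_user_def tg_def Let_def by simp

lemma V_user_eq: "\<rho>>0 \<Longrightarrow> F>0 \<Longrightarrow> V_user D r \<rho> \<zeta> B RS F e = D/(B*r) * vg \<zeta> (B*r) RS (F/\<rho>) e"
  unfolding V_user_def vg_def Let_def by simp

lemma T_opt_eq: "\<rho>>0 \<Longrightarrow> F>0 \<Longrightarrow> T_opt D r \<rho> \<zeta> B RS F = D * topt \<zeta> (B*r) RS (F/\<rho>)"
proof -
  assume a: "\<rho>>0" "F>0"
  have "D * \<rho> / (F * (1 - \<zeta>) + \<rho> * RS) = D * (1/((1-\<zeta>)*(F/\<rho>)+RS))"
  proof -
    have "(1-\<zeta>)*(F/\<rho>)+RS = (F * (1 - \<zeta>) + \<rho> * RS)/\<rho>" using a by (simp add: field_simps)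
    then show ?thesis using a by simp
  qed
  then show ?thesis unfolding T_opt_def topt_def Let_def by simp
qed

lemma V_opt_eq: "\<rho>>0 \<Longrightarrow> F>0 \<Longrightarrow> V_opt D r \<rho> \<zeta> B RS F = D/(B*r) * vopt \<zeta> (B*r) RS (F/\<rho>)"
  unfolding V_opt_def vopt_def Let_def by simp

lemma frac_le1: "(0::real)<K \<Longrightarrow> 0<q \<Longrightarrow> q \<le> p*K \<Longrightarrow> 1/K \<le> p/q"
  by (simp add: field_simps)

lemma frac_le2: "(0::real)<K \<Longrightarrow> 0<q \<Longrightarrow> p' * q \<le> p*K \<Longrightarrow> p'/K \<le> p/q"
  by (simp add: field_simps)

lemma tg_lb:
  fixes z c R x e :: real
  assumes c: "c>0" and R: "R>0" and x: "x>0" and z0: "0<z" and z1: "z<1" and e0: "0\<le>e" and e1: "e\<le>1"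
  shows "1/c \<le> tg z c R x e \<and> z/R \<le> tg z c R x e \<and> 1/((1-z)*x+R) \<le> tg z c R x e"
proof -
  define a where "a = z*e+1-e"
  have ha: "a = z + (1-z)*(1-e)" unfolding a_def by algebra
  have h1: "(1-z)*(1-e) \<ge> 0" using z1 e1 by simp
  have haz: "z \<le> a" using ha h1 by linarith
  have hapos: "0 < a" using haz z0 by linarith
  have h2: "(1-z)*e \<ge> 0" using z1 e0 by simp
  have ha': "a = 1 - (1-z)*e" unfolding a_def by algebra
  have ha1: "a \<le> 1" using ha' h2 by linarith
  have hec: "e*c \<le> c" using e1 c by (simp add: mult_left_le_one_le)
  define K where "K = (1-z)*x+R"
  have h3: "(1-z)*x > 0" using z1 x by simp
  have Kpos: "K > 0" unfolding K_def using h3 R by linarith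
  have tg: "tg z c R x e = (if e*c \<ge> x then (if z*x+(1-e)*c \<ge> R then (if x \<ge> e*R/a then a/R else e/x) else e/x)
    else (if a*c \<ge> R then a/R else 1/c))" unfolding tg_def a_def by simp
  show ?thesis
  proof (cases "e*c \<ge> x")
    case True
    have "e \<noteq> 0" using True x by auto
    then have epos: "e > 0" using e0 by linarith
    have cx: "x \<le> c" using True hec by linarith
    have ec1: "e*(1-e)*c \<ge> (1-e)*x" using True e1 by (metis diff_ge_0_iff_ge mult.commute mult.left_commute mult_left_mono)
    show ?thesis
    proof (cases "z*x+(1-e)*c \<ge> R")
      case T2: True
      show ?thesis
      proof (cases "x \<ge> e*R/a")
        case T3: True
        have v: "tg z c R x e = a/R" using tg True T2 T3 by simp
        have zx: "z*x \<le> z*(e*c)" using True z0 by simp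
        have "R \<le> a*c" using T2 zx unfolding a_def by (simp add: algebra_simps)
        then have b1: "1/c \<le> a/R" using c R by (intro frac_le1) auto
        have b2: "z/R \<le> a/R" using haz R by (simp add: divide_right_mono)
        have "e*R \<le> a*x" using T3 hapos by (simp add: field_simps)
        then have "(1-z)*(e*R) \<le> (1-z)*(a*x)" using z1 by simp
        moreover have "a*K = (1-z)*(a*x) + a*R" unfolding K_def by algebra
        moreover have "a*R = R - (1-z)*(e*R)" using ha' by algebra
        ultimately have "R \<le> a*K" by linarith
        then have b3: "1/K \<le> a/R" using Kpos R by (intro frac_le1) auto
        show ?thesis using v b1 b2 b3 K_def by simp
      next
        case F3: False
        have v: "tg z c R x e = e/x" using tg True T2 F3 by simp
        have xa: "x*a < e*R" using F3 hapos by (simp add: field_simps)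
        have b1: "1/c \<le> e/x" using True c x by (intro frac_le1) (auto simp: mult.commute)
        have "z*x \<le> a*x" using haz x by simp
        then have "z * x \<le> e*R" using xa by (simp add: mult.commute)
        then have b2: "z/R \<le> e/x" using R x by (intro frac_le2) auto
        have "e*K = (1-z)*e*x + e*R" unfolding K_def by algebra
        moreover have "x*a = x - (1-z)*e*x" using ha' by algebra
        ultimately have "x \<le> e*K" using xa h2 x by (smt (verit) mult_nonneg_nonneg)
        then have b3: "1/K \<le> e/x" using Kpos x by (intro frac_le1) auto
        show ?thesis using v b1 b2 b3 K_def by simp
      qed
    next
      case F2: False
      have v: "tg z c R x e = e/x" using tg True F2 by simp
      have b1: "1/c \<le> e/x" using True c x by (intro frac_le1) (auto simp: mult.commute)
      have "e*R > e*(z*x+(1-e)*c)" using F2 epos by simp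
      then have "e*R > a*x" using ec1 unfolding a_def by (simp add: algebra_simps)
      then have xa: "x*a < e*R" by (simp add: mult.commute)
      have "z*x \<le> a*x" using haz x by simp
      then have "z * x \<le> e*R" using xa by (simp add: mult.commute)
      then have b2: "z/R \<le> e/x" using R x by (intro frac_le2) auto
      have "e*K = (1-z)*e*x + e*R" unfolding K_def by algebra
        moreover have "x*a = x - (1-z)*e*x" using ha' by algebra
        ultimately have "x \<le> e*K" using xa h2 x by (smt (verit) mult_nonneg_nonneg)
      then have b3: "1/K \<le> e/x" using Kpos x by (intro frac_le1) auto
      show ?thesis using v b1 b2 b3 K_def by simp
    qed
  next
    case False
    show ?thesis
    proof (cases "a*c \<ge> R")
      case T2: True
      have v: "tg z c R x e = a/R" using tg False T2 by simp
      have b1: "1/c \<le> a/R" using T2 c R by (intro frac_le1) (auto simp: mult.commute)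
      have b2: "z/R \<le> a/R" using haz R by (simp add: divide_right_mono)
      have "e*R \<le> e*(a*c)" using T2 e0 by (simp add: mult_left_mono)
      also have "\<dots> = a*(e*c)" by simp
      also have "\<dots> \<le> a*x" using False hapos by simp
      finally have "e*R \<le> a*x" .
      then have "(1-z)*(e*R) \<le> (1-z)*(a*x)" using z1 by simp
      moreover have "a*K = (1-z)*(a*x) + a*R" unfolding K_def by algebra
        moreover have "a*R = R - (1-z)*(e*R)" using ha' by algebra
        ultimately have "R \<le> a*K" by linarith
      then have b3: "1/K \<le> a/R" using Kpos R by (intro frac_le1) auto
      show ?thesis using v b1 b2 b3 K_def by simp
    next
      case F2: False
      have v: "tg z c R x e = 1/c" using tg False F2 by simp
      have "z*c \<le> a*c" using haz c by simp
      then have "z*c \<le> R" using F2 by linarith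
      then have b2: "z/R \<le> 1/c" using R c by (intro frac_le2) auto
      have "(1-z)*(e*c) \<le> (1-z)*x" using False z1 by simp
      then have "c \<le> K" using F2 unfolding K_def ha' by (simp add: algebra_simps)
      then have b3: "1/K \<le> 1/c" using Kpos c by (intro frac_le1) auto
      show ?thesis using v b2 b3 K_def by simp
    qed
  qed
qed

lemma vg_lb:
  fixes z c R x e :: real
  assumes c: "c>0" and R: "R>0" and x: "x>0" and z0: "0<z" and z1: "z<1" and e0: "0\<le>e" and e1: "e\<le>1"
  shows "0 \<le> vg z c R x e \<and> c-R-(1-z)*x \<le> vg z c R x e \<and> z*c-R \<le> vg z c R x e"
proof -
  define a where "a = z*e+1-e"
  have hac: "a*c = z*(e*c) + c - e*c" unfolding a_def by algebra
  have i1: "(1-z)*x = x - z*x" by algebra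
  have hec: "e*c \<le> c" using e1 c by (simp add: mult_left_le_one_le)
  have h1: "(1-z)*(1-e) \<ge> 0" using z1 e1 by simp
  have "a*c - z*c = ((1-z)*(1-e))*c" unfolding a_def by algebra
  then have hzc: "z*c \<le> a*c" using h1 c by (metis diff_ge_0_iff_ge mult_nonneg_nonneg less_imp_le)
  have vg: "vg z c R x e = (if e*c \<ge> x then (if z*x+(1-e)*c \<ge> R then c-R-(1-z)*x else e*c - x)
    else (if a*c \<ge> R then a*c-R else 0))" unfolding vg_def a_def by simp
  have i2: "(1-e)*c = c - e*c" by algebra
  show ?thesis
  proof (cases "e*c \<ge> x")
    case True
    have cx: "x \<le> c" using True hec by linarith
    have "(1-z)*x \<le> (1-z)*c" using cx z1 by simp
    then have p1: "x - z*x \<le> c - z*c" by (simp add: algebra_simps)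
    have zx: "z*x \<le> z*(e*c)" using True z0 by simp
    show ?thesis
    proof (cases "z*x+(1-e)*c \<ge> R")
      case T2: True
      have v: "vg z c R x e = c-R-(1-z)*x" using vg True T2 by simp
      show ?thesis unfolding v i1 using T2 i2 True p1 by linarith
    next
      case F2: False
      have v: "vg z c R x e = e*c-x" using vg True F2 by simp
      show ?thesis unfolding v i1 using F2 i2 True p1 by linarith
    qed
  next
    case False
    have "(1-z)*(e*c) \<le> (1-z)*x" using False z1 by simp
    then have p2: "e*c - z*(e*c) \<le> x - z*x" by (simp add: algebra_simps)
    show ?thesis
    proof (cases "a*c \<ge> R")
      case T2: True
      have v: "vg z c R x e = a*c-R" using vg False T2 by simp
      show ?thesis unfolding v i1 using T2 hac p2 hzc by linarith
    next
      case F2: False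
      have v: "vg z c R x e = 0" using vg False F2 by simp
      show ?thesis unfolding v i1 using F2 hac p2 hzc by linarith
    qed
  qed
qed

lemma mid_choice:
  fixes z c R x :: real
  assumes c: "c>0" and R: "R>0" and x: "x>0" and z0: "0<z" and z1: "z<1"
    and Kc: "R+(1-z)*x \<le> c" and zx: "z*x < R"
  shows "0 \<le> x/(R+(1-z)*x) \<and> x/(R+(1-z)*x) \<le> 1 \<and> tg z c R x (x/(R+(1-z)*x)) = 1/(R+(1-z)*x)
     \<and> vg z c R x (x/(R+(1-z)*x)) = c-R-(1-z)*x"
proof -
  define K where "K = R+(1-z)*x"
  have h3: "(1-z)*x > 0" using z1 x by simp
  have Kpos: "K > 0" unfolding K_def using h3 R by linarith
  define e where "e = x/K"
  have eK: "e*K = x" unfolding e_def using Kpos by simp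
  have e0: "e \<ge> 0" unfolding e_def using Kpos x by simp
  define a where "a = z*e+1-e"
  have "a*K = K - (1-z)*(e*K)" unfolding a_def by algebra
  then have aK: "a*K = R" using eK unfolding K_def by simp
  have apos: "a > 0" using aK Kpos R by (metis zero_less_mult_pos2)
  have "(1-e)*K = K - e*K" by algebra
  then have "(1-e)*K = R - z*x" using eK unfolding K_def by (simp add: algebra_simps)
  then have omK: "(1-e)*K > 0" using zx by linarith
  then have om: "1 - e > 0" using Kpos by (simp add: zero_less_mult_iff)
  have e1: "e \<le> 1" using om by linarith
  have c1: "e*c \<ge> x" using eK mult_left_mono[OF Kc[folded K_def] e0] by linarith
  have "(1-e)*c \<ge> (1-e)*K" using Kc[folded K_def] om by simp
  then have c2: "z*x+(1-e)*c \<ge> R" using \<open>(1-e)*K = R - z*x\<close> by linarith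
  have "e*R/a = e*K" using aK apos by (simp add: field_simps)
  then have c3: "x \<ge> e*R/a" using eK by simp
  have "a/R = 1/K" using aK Kpos R by (simp add: field_simps)
  then have t: "tg z c R x e = 1/K" unfolding tg_def using c1 c2 c3 unfolding a_def by simp
  have v: "vg z c R x e = c-R-(1-z)*x" unfolding vg_def using c1 c2 by simp
  show ?thesis using t v e0 e1 unfolding e_def K_def by simp
qed

lemma topt_cases: "topt z c R x = 1/c \<or> topt z c R x = z/R \<or> topt z c R x = 1/((1-z)*x+R)"
  unfolding topt_def by auto

lemma vopt_cases: "vopt z c R x = 0 \<or> vopt z c R x = c-R-(1-z)*x \<or> vopt z c R x = z*c-R"
  unfolding vopt_def by auto

lemma opt_le:
  fixes z c R x e :: real
  assumes c: "c>0" and R: "R>0" and x: "x>0" and z0: "0<z" and z1: "z<1" and e0: "0\<le>e" and e1: "e\<le>1"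
  shows "topt z c R x \<le> tg z c R x e \<and> vopt z c R x \<le> vg z c R x e"
  using tg_lb[OF assms] vg_lb[OF assms] topt_cases[of z c R x] vopt_cases[of z c R x] by auto

lemma ex_opt:
  fixes z c R x :: real
  assumes c: "c>0" and R: "R>0" and x: "x>0" and z0: "0<z" and z1: "z<1"
  shows "\<exists>e. 0 \<le> e \<and> e \<le> 1 \<and> tg z c R x e = topt z c R x \<and> vg z c R x e = vopt z c R x"
proof -
  have cz: "c < R/z \<longleftrightarrow> z*c < R" using z0 by (simp add: field_simps)
  have xz: "x < R/z \<longleftrightarrow> z*x < R" using z0 by (simp add: field_simps)
  have xcR: "x < (c-R)/(1-z) \<longleftrightarrow> (1-z)*x < c-R" using z1 by (simp add: field_simps)
  have Kc: "(1-z)*x+R = R+(1-z)*x" by simp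
  show ?thesis
  proof (cases "c < R")
    case True
    have "tg z c R x 0 = topt z c R x \<and> vg z c R x 0 = vopt z c R x"
      unfolding tg_def vg_def topt_def vopt_def using True x by simp
    then show ?thesis by (intro exI[of _ 0]) simp
  next
    case cR: False
    show ?thesis
    proof (cases "z*c < R")
      case zc: True
      show ?thesis
      proof (cases "(1-z)*x < c-R")
        case True
        have "z*x < R"
        proof -
          have "z*((1-z)*x) \<le> z*(c-R)" using True z0 by simp
          moreover have "(1-z)*(z*x) = z*((1-z)*x)" by algebra
          moreover have "z*(c-R) = z*c - z*R" by algebra
          moreover have "(1-z)*R = R - z*R" by algebra
          ultimately have "(1-z)*(z*x) < (1-z)*R" using zc by linarith
          then show ?thesis using z1 by simp
        qed
        moreover have "R+(1-z)*x \<le> c" using True by linarith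
        ultimately have m: "0 \<le> x/(R+(1-z)*x) \<and> x/(R+(1-z)*x) \<le> 1 \<and> tg z c R x (x/(R+(1-z)*x)) = 1/(R+(1-z)*x)
          \<and> vg z c R x (x/(R+(1-z)*x)) = c-R-(1-z)*x" using mid_choice[OF c R x z0 z1] by blast
        have "topt z c R x = 1/(R+(1-z)*x) \<and> vopt z c R x = c-R-(1-z)*x"
          unfolding topt_def vopt_def using cR zc cz xcR True Kc by simp
        then show ?thesis using m by metis
      next
        case F: False
        define e where "e = (c-R)/((1-z)*c)"
        have pc: "(1-z)*c > 0" using z1 c by simp
        have ec: "e*c = (c-R)/(1-z)" unfolding e_def using c z1 by (simp add: field_simps)
        have ec2: "(1-z)*(e*c) = c-R" unfolding ec using z1 by simp
        have e0: "e \<ge> 0" unfolding e_def using cR pc by simp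
        have "c - R \<le> (1-z)*c" using zc by (simp add: algebra_simps)
        then have e1: "e \<le> 1" unfolding e_def using pc by simp
        have "(1-z)*(e*c) \<le> (1-z)*x" using F ec2 by linarith
        then have "x \<ge> e*c" using z1 by (meson diff_gt_0_iff_gt mult_left_le_imp_le)
        have ac: "(z*e+1-e)*c = R"
        proof -
          have "(z*e+1-e)*c = c - (1-z)*(e*c)" by algebra
          then show ?thesis using ec2 by simp
        qed
        have to: "topt z c R x = 1/c \<and> vopt z c R x = 0"
          unfolding topt_def vopt_def using cR zc cz xcR F by simp
        have "tg z c R x e = 1/c \<and> vg z c R x e = 0"
        proof (cases "x \<le> e*c")
          case True
          have xe: "x = e*c" using True \<open>x \<ge> e*c\<close> by simp
          have c2: "z*x+(1-e)*c \<ge> R" using ac xe by (simp add: algebra_simps)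
          have apos: "z*e+1-e > 0" using ac R c by (metis zero_less_mult_pos2)
          have "e*R/(z*e+1-e) = e*((z*e+1-e)*c)/(z*e+1-e)" using ac by simp
          also have "\<dots> = e*c" using apos by simp
          finally have "e*R/(z*e+1-e) = e*c" .
          then have c3: "x \<ge> e*R/(z*e+1-e)" using xe by simp
          have "(z*e+1-e)/R = 1/c" using ac R c by (simp add: field_simps)
          moreover have "c-R-(1-z)*x = 0" using ec2 xe by simp
          ultimately show ?thesis unfolding tg_def vg_def using True c2 c3 by simp
        next
          case False
          have "(z*e+1-e)/R = 1/c" using ac R c by (simp add: field_simps)
          then show ?thesis unfolding tg_def vg_def using False ac by simp
        qed
        then show ?thesis using to e0 e1 by metis
      qed
    next
      case zc: False
      show ?thesis
      proof (cases "z*x < R")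
        case True
        have "x < R/z" using True xz by simp
        then have "(1-z)*x < (1-z)*(R/z)" using z1 by (intro mult_strict_left_mono) auto
        also have "(1-z)*(R/z) = R/z - R" using z0 by (simp add: field_simps)
        also have "R/z \<le> c" using zc z0 by (simp add: field_simps)
        finally have "R+(1-z)*x \<le> c" by simp
        then have m: "0 \<le> x/(R+(1-z)*x) \<and> x/(R+(1-z)*x) \<le> 1 \<and> tg z c R x (x/(R+(1-z)*x)) = 1/(R+(1-z)*x)
          \<and> vg z c R x (x/(R+(1-z)*x)) = c-R-(1-z)*x" using mid_choice[OF c R x z0 z1] True by blast
        have "topt z c R x = 1/(R+(1-z)*x) \<and> vopt z c R x = c-R-(1-z)*x"
          unfolding topt_def vopt_def using cR zc cz xz True Kc by simp
        then show ?thesis using m by metis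
      next
        case zx: False
        have xR: "x \<ge> R/z" using zx z0 by (simp add: field_simps)
        show ?thesis
        proof (cases "x < c")
          case True
          have "tg z c R x 1 = z/R \<and> vg z c R x 1 = c-R-(1-z)*x" unfolding tg_def vg_def using True zx xR by simp
          moreover have "topt z c R x = z/R \<and> vopt z c R x = c-R-(1-z)*x"
            unfolding topt_def vopt_def using cR zc cz xz zx True by simp
          ultimately show ?thesis by (intro exI[of _ 1]) simp
        next
          case F: False
          have "tg z c R x 1 = z/R \<and> vg z c R x 1 = z*c-R"
          proof (cases "x = c")
            case True
            then show ?thesis unfolding tg_def vg_def using zx xR by (simp add: algebra_simps)
          next
            case False
            then show ?thesis unfolding tg_def vg_def using F zc by simp
          qed
          moreover have "topt z c R x = z/R \<and> vopt z c R x = z*c-R"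
            unfolding topt_def vopt_def using cR zc cz xz zx F by simp
          ultimately show ?thesis by (intro exI[of _ 1]) simp
        qed
      qed
    qed
  qed
qed

lemma user_le:
  assumes D: "D>0" and r: "r>0" and rho: "\<rho>>0" and z0: "0<\<zeta>" and z1: "\<zeta><1"
    and B: "B>0" and RS: "RS>0" and F: "F>0" and e0: "0\<le>e" and e1: "e\<le>1"
  shows "T_opt D r \<rho> \<zeta> B RS F \<le> T_user D r \<rho> \<zeta> B RS F e \<and> V_opt D r \<rho> \<zeta> B RS F \<le> V_user D r \<rho> \<zeta> B RS F e"
proof -
  have c: "B*r > 0" using B r by simp
  have x: "F/\<rho> > 0" using F rho by simp
  have o: "topt \<zeta> (B*r) RS (F/\<rho>) \<le> tg \<zeta> (B*r) RS (F/\<rho>) e \<and> vopt \<zeta> (B*r) RS (F/\<rho>) \<le> vg \<zeta> (B*r) RS (F/\<rho>) e"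
    using opt_le[OF c RS x z0 z1 e0 e1] .
  have Dc: "D/(B*r) \<ge> 0" using D c by simp
  show ?thesis unfolding T_user_eq[OF rho F] V_user_eq[OF rho F] T_opt_eq[OF rho F] V_opt_eq[OF rho F]
    using mult_left_mono[OF conjunct1[OF o], of D] mult_left_mono[OF conjunct2[OF o] Dc] D by simp
qed

lemma user_ex:
  assumes D: "D>0" and r: "r>0" and rho: "\<rho>>0" and z0: "0<\<zeta>" and z1: "\<zeta><1"
    and B: "B>0" and RS: "RS>0" and F: "F>0"
  shows "\<exists>e. 0\<le>e \<and> e\<le>1 \<and> T_user D r \<rho> \<zeta> B RS F e = T_opt D r \<rho> \<zeta> B RS F \<and> V_user D r \<rho> \<zeta> B RS F e = V_opt D r \<rho> \<zeta> B RS F"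
proof -
  have c: "B*r > 0" using B r by simp
  have x: "F/\<rho> > 0" using F rho by simp
  obtain e where "0 \<le> e \<and> e \<le> 1 \<and> tg \<zeta> (B*r) RS (F/\<rho>) e = topt \<zeta> (B*r) RS (F/\<rho>) \<and> vg \<zeta> (B*r) RS (F/\<rho>) e = vopt \<zeta> (B*r) RS (F/\<rho>)"
    using ex_opt[OF c RS x z0 z1] by blast
  then show ?thesis unfolding T_user_eq[OF rho F] V_user_eq[OF rho F] T_opt_eq[OF rho F] V_opt_eq[OF rho F]
    by auto
qed

lemma T_opt_pos:
  assumes D: "D>0" and r: "r>0" and rho: "\<rho>>0" and z0: "0<\<zeta>" and z1: "\<zeta><1"
    and B: "B>0" and RS: "RS>0" and F: "F>0"
  shows "T_opt D r \<rho> \<zeta> B RS F > 0"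
proof -
  have c: "B*r > 0" using B r by simp
  have x: "F/\<rho> > 0" using F rho by simp
  have "(1-\<zeta>)*(F/\<rho>) > 0" using z1 x by (intro mult_pos_pos) auto
  then have K: "(1-\<zeta>)*(F/\<rho>) + RS > 0" using RS by linarith
  have "1/(B*r) > 0" "\<zeta>/RS > 0" "1/((1-\<zeta>)*(F/\<rho>) + RS) > 0" using c z0 RS K by auto
  then have "topt \<zeta> (B*r) RS (F/\<rho>) > 0" using topt_cases[of \<zeta> "B*r" RS "F/\<rho>"] by metis
  then show ?thesis unfolding T_opt_eq[OF rho F] using D by simp
qed

lemma Max_img_mono:
  fixes f g :: "'a \<Rightarrow> real"
  assumes "finite A" "A \<noteq> {}" "\<forall>u\<in>A. f u \<le> g u"
  shows "Max (f`A) \<le> Max (g`A)"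
proof -
  have "\<forall>u\<in>A. f u \<le> Max (g`A)"
  proof
    fix u assume u: "u\<in>A"
    have "g u \<le> Max (g`A)" using assms(1) u by simp
    then show "f u \<le> Max (g`A)" using assms(3) u by (meson order_trans)
  qed
  then show ?thesis using assms(1,2) by (simp add: Max_le_iff)
qed

theorem theorem2:
  fixes U :: nat and D r \<rho> \<zeta> :: "nat \<Rightarrow> real"
    and V_total B_total RS_total F_total :: real
  assumes "U \<ge> 1"
    and "\<forall>u\<in>{1..U}. D u > 0 \<and> r u > 0 \<and> \<rho> u > 0 \<and> 0 < \<zeta> u \<and> \<zeta> u < 1"
    and "V_total \<ge> 0" and "B_total > 0" and "RS_total > 0" and "F_total > 0"
  shows "Inf {Max ((\<lambda>u. T_user (D u) (r u) (\<rho> u) (\<zeta> u) (B u) (RS u) (F u) (\<eta> u)) ` {1..U})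
             | B RS F \<eta>.
               (\<forall>u\<in>{1..U}. B u > 0 \<and> RS u > 0 \<and> F u > 0 \<and> 0 \<le> \<eta> u \<and> \<eta> u \<le> 1) \<and>
               (\<Sum>u\<in>{1..U}. V_user (D u) (r u) (\<rho> u) (\<zeta> u) (B u) (RS u) (F u) (\<eta> u)) \<le> V_total \<and>
               (\<Sum>u\<in>{1..U}. B u) \<le> B_total \<and>
               (\<Sum>u\<in>{1..U}. RS u) \<le> RS_total \<and>
               (\<Sum>u\<in>{1..U}. F u) \<le> F_total}
       = Inf {Max ((\<lambda>u. T_opt (D u) (r u) (\<rho> u) (\<zeta> u) (B u) (RS u) (F u)) ` {1..U})
             | B RS F.
               (\<forall>u\<in>{1..U}. B u > 0 \<and> RS u > 0 \<and> F u > 0) \<and>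
               (\<Sum>u\<in>{1..U}. V_opt (D u) (r u) (\<rho> u) (\<zeta> u) (B u) (RS u) (F u)) \<le> V_total \<and>
               (\<Sum>u\<in>{1..U}. B u) \<le> B_total \<and>
               (\<Sum>u\<in>{1..U}. RS u) \<le> RS_total \<and>
               (\<Sum>u\<in>{1..U}. F u) \<le> F_total}"
  (is "Inf ?S1 = Inf ?S2")
proof -
  note P = assms(2)
  have fin: "finite {1..U}" and ne: "{1..U} \<noteq> {}" using assms(1) by auto
  have sub: "?S2 \<subseteq> ?S1"
  proof
    fix y assume "y \<in> ?S2"
    then obtain B RS F where y: "y = Max ((\<lambda>u. T_opt (D u) (r u) (\<rho> u) (\<zeta> u) (B u) (RS u) (F u)) ` {1..U})"
      and pos: "\<forall>u\<in>{1..U}. B u > 0 \<and> RS u > 0 \<and> F u > 0"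
      and V: "(\<Sum>u\<in>{1..U}. V_opt (D u) (r u) (\<rho> u) (\<zeta> u) (B u) (RS u) (F u)) \<le> V_total"
      and sB: "(\<Sum>u\<in>{1..U}. B u) \<le> B_total" and sR: "(\<Sum>u\<in>{1..U}. RS u) \<le> RS_total"
      and sF: "(\<Sum>u\<in>{1..U}. F u) \<le> F_total" unfolding mem_Collect_eq by (elim exE conjE) (rule that; assumption)
    have "\<forall>u\<in>{1..U}. \<exists>e. 0\<le>e \<and> e\<le>1 \<and> T_user (D u) (r u) (\<rho> u) (\<zeta> u) (B u) (RS u) (F u) e = T_opt (D u) (r u) (\<rho> u) (\<zeta> u) (B u) (RS u) (F u)
        \<and> V_user (D u) (r u) (\<rho> u) (\<zeta> u) (B u) (RS u) (F u) e = V_opt (D u) (r u) (\<rho> u) (\<zeta> u) (B u) (RS u) (F u)"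
    proof
      fix u assume u: "u \<in> {1..U}"
      have p: "D u > 0" "r u > 0" "\<rho> u > 0" "0 < \<zeta> u" "\<zeta> u < 1" using P u by auto
      have q: "B u > 0" "RS u > 0" "F u > 0" using pos u by auto
      show "\<exists>e. 0\<le>e \<and> e\<le>1 \<and> T_user (D u) (r u) (\<rho> u) (\<zeta> u) (B u) (RS u) (F u) e = T_opt (D u) (r u) (\<rho> u) (\<zeta> u) (B u) (RS u) (F u)
        \<and> V_user (D u) (r u) (\<rho> u) (\<zeta> u) (B u) (RS u) (F u) e = V_opt (D u) (r u) (\<rho> u) (\<zeta> u) (B u) (RS u) (F u)"
        by (rule user_ex[OF p q])
    qed
    then obtain \<eta> where eta: "\<forall>u\<in>{1..U}. 0\<le>\<eta> u \<and> \<eta> u\<le>1 \<and> T_user (D u) (r u) (\<rho> u) (\<zeta> u) (B u) (RS u) (F u) (\<eta> u) = T_opt (D u) (r u) (\<rho> u) (\<zeta> u) (B u) (RS u) (F u)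
        \<and> V_user (D u) (r u) (\<rho> u) (\<zeta> u) (B u) (RS u) (F u) (\<eta> u) = V_opt (D u) (r u) (\<rho> u) (\<zeta> u) (B u) (RS u) (F u)"
      by (rule bchoice[THEN exE])
    have y2: "y = Max ((\<lambda>u. T_user (D u) (r u) (\<rho> u) (\<zeta> u) (B u) (RS u) (F u) (\<eta> u)) ` {1..U})"
      unfolding y using eta by (intro arg_cong[where f=Max] image_cong) auto
    have V2: "(\<Sum>u\<in>{1..U}. V_user (D u) (r u) (\<rho> u) (\<zeta> u) (B u) (RS u) (F u) (\<eta> u)) \<le> V_total"
    proof -
      have "(\<Sum>u\<in>{1..U}. V_user (D u) (r u) (\<rho> u) (\<zeta> u) (B u) (RS u) (F u) (\<eta> u)) = (\<Sum>u\<in>{1..U}. V_opt (D u) (r u) (\<rho> u) (\<zeta> u) (B u) (RS u) (F u))"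
        using eta by (intro sum.cong) auto
      then show ?thesis using V by simp
    qed
    have pe: "\<forall>u\<in>{1..U}. B u > 0 \<and> RS u > 0 \<and> F u > 0 \<and> 0 \<le> \<eta> u \<and> \<eta> u \<le> 1" using pos eta by simp
    show "y \<in> ?S1" unfolding mem_Collect_eq
      by (intro exI[of _ B] exI[of _ RS] exI[of _ F] exI[of _ \<eta>] conjI y2 pe V2 sB sR sF)
  qed
  have low: "\<forall>y\<in>?S1. \<exists>w\<in>?S2. w \<le> y"
  proof
    fix y assume "y \<in> ?S1"
    then obtain B RS F \<eta> where y: "y = Max ((\<lambda>u. T_user (D u) (r u) (\<rho> u) (\<zeta> u) (B u) (RS u) (F u) (\<eta> u)) ` {1..U})"
      and pos: "\<forall>u\<in>{1..U}. B u > 0 \<and> RS u > 0 \<and> F u > 0 \<and> 0 \<le> \<eta> u \<and> \<eta> u \<le> 1"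
      and V: "(\<Sum>u\<in>{1..U}. V_user (D u) (r u) (\<rho> u) (\<zeta> u) (B u) (RS u) (F u) (\<eta> u)) \<le> V_total"
      and sB: "(\<Sum>u\<in>{1..U}. B u) \<le> B_total" and sR: "(\<Sum>u\<in>{1..U}. RS u) \<le> RS_total"
      and sF: "(\<Sum>u\<in>{1..U}. F u) \<le> F_total" unfolding mem_Collect_eq by (elim exE conjE) (rule that; assumption)
    have le: "\<forall>u\<in>{1..U}. T_opt (D u) (r u) (\<rho> u) (\<zeta> u) (B u) (RS u) (F u) \<le> T_user (D u) (r u) (\<rho> u) (\<zeta> u) (B u) (RS u) (F u) (\<eta> u)
       \<and> V_opt (D u) (r u) (\<rho> u) (\<zeta> u) (B u) (RS u) (F u) \<le> V_user (D u) (r u) (\<rho> u) (\<zeta> u) (B u) (RS u) (F u) (\<eta> u)"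
    proof
      fix u assume u: "u \<in> {1..U}"
      have p: "D u > 0" "r u > 0" "\<rho> u > 0" "0 < \<zeta> u" "\<zeta> u < 1" using P u by auto
      have q: "B u > 0" "RS u > 0" "F u > 0" "0 \<le> \<eta> u" "\<eta> u \<le> 1" using pos u by auto
      show "T_opt (D u) (r u) (\<rho> u) (\<zeta> u) (B u) (RS u) (F u) \<le> T_user (D u) (r u) (\<rho> u) (\<zeta> u) (B u) (RS u) (F u) (\<eta> u)
       \<and> V_opt (D u) (r u) (\<rho> u) (\<zeta> u) (B u) (RS u) (F u) \<le> V_user (D u) (r u) (\<rho> u) (\<zeta> u) (B u) (RS u) (F u) (\<eta> u)"
        by (rule user_le[OF p q])
    qed
    have "(\<Sum>u\<in>{1..U}. V_opt (D u) (r u) (\<rho> u) (\<zeta> u) (B u) (RS u) (F u)) \<le> (\<Sum>u\<in>{1..U}. V_user (D u) (r u) (\<rho> u) (\<zeta> u) (B u) (RS u) (F u) (\<eta> u))"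
      using le by (intro sum_mono) auto
    then have V2: "(\<Sum>u\<in>{1..U}. V_opt (D u) (r u) (\<rho> u) (\<zeta> u) (B u) (RS u) (F u)) \<le> V_total" using V by linarith
    have M: "Max ((\<lambda>u. T_opt (D u) (r u) (\<rho> u) (\<zeta> u) (B u) (RS u) (F u)) ` {1..U}) \<le> y"
      unfolding y using le fin ne by (intro Max_img_mono) auto
    have "Max ((\<lambda>u. T_opt (D u) (r u) (\<rho> u) (\<zeta> u) (B u) (RS u) (F u)) ` {1..U}) \<in> ?S2"
      unfolding mem_Collect_eq using pos by (intro exI[of _ B] exI[of _ RS] exI[of _ F] conjI refl V2 sB sR sF) simp
    then show "\<exists>w\<in>?S2. w \<le> y" using M by blast
  qed
  have nonneg: "\<forall>w\<in>?S2. 0 \<le> w"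
  proof
    fix w assume "w \<in> ?S2"
    then obtain B RS F where w: "w = Max ((\<lambda>u. T_opt (D u) (r u) (\<rho> u) (\<zeta> u) (B u) (RS u) (F u)) ` {1..U})"
      and pos: "\<forall>u\<in>{1..U}. B u > 0 \<and> RS u > 0 \<and> F u > 0" unfolding mem_Collect_eq by (elim exE conjE) (rule that; assumption)
    have "1 \<in> {1..U}" using assms(1) by simp
    then have "T_opt (D 1) (r 1) (\<rho> 1) (\<zeta> 1) (B 1) (RS 1) (F 1) > 0" using P pos T_opt_pos by simp
    moreover have "T_opt (D 1) (r 1) (\<rho> 1) (\<zeta> 1) (B 1) (RS 1) (F 1) \<le> w" unfolding w using fin \<open>1 \<in> {1..U}\<close> by simp
    ultimately show "0 \<le> w" by linarith
  qed
  have lowE: "\<exists>w. w \<in> ?S2 \<and> w \<le> y" if yS: "y \<in> ?S1" for y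
  proof -
    from low yS have "\<exists>w\<in>?S2. w \<le> y" by (rule bspec)
    then obtain w where w1: "w \<in> ?S2" and w2: "w \<le> y" by (rule bexE)
    show ?thesis using w1 w2 by (intro exI[of _ w] conjI)
  qed
  show ?thesis
  proof (cases "?S1 = {}")
    case True
    from sub have "?S2 \<subseteq> {}" unfolding True .
    then have "?S2 = {}" by (simp only: subset_empty)
    then show ?thesis using True by (simp only:)
  next
    case False
    from False obtain y where yS: "y \<in> ?S1" unfolding ex_in_conv[symmetric] by (rule exE)
    obtain w where w1: "w \<in> ?S2" and w2: "w \<le> y" using lowE[OF yS] by (elim exE conjE)
    have S2ne: "?S2 \<noteq> {}" using w1 by (intro ex_in_conv[THEN iffD1] exI)
    have bdd2: "bdd_below ?S2"
    proof (rule bdd_belowI[of _ 0])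
      fix v assume "v \<in> ?S2"
      with nonneg show "0 \<le> v" by (rule bspec)
    qed
    have bdd1: "bdd_below ?S1"
    proof (rule bdd_belowI[of _ 0])
      fix v assume vS: "v \<in> ?S1"
      obtain w' where w'1: "w' \<in> ?S2" and w'2: "w' \<le> v" using lowE[OF vS] by (elim exE conjE)
      from nonneg w'1 have "0 \<le> w'" by (rule bspec)
      then show "0 \<le> v" using w'2 by (rule order_trans)
    qed
    have a: "Inf ?S1 \<le> Inf ?S2" using cInf_superset_mono[OF S2ne bdd1 sub] .
    have b: "Inf ?S2 \<le> Inf ?S1"
    proof (rule cInf_greatest[OF False])
      fix v assume vS: "v \<in> ?S1"
      obtain w' where w'1: "w' \<in> ?S2" and w'2: "w' \<le> v" using lowE[OF vS] by (elim exE conjE)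
      have "Inf ?S2 \<le> w'" using w'1 bdd2 by (rule cInf_lower)
      then show "Inf ?S2 \<le> v" using w'2 by (rule order_trans)
    qed
    show ?thesis using a b by (rule order_antisym)
  qed
qed

end
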